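(* Let $\Delta$ be an alphabet, $\zeta:\Sigma\to 2^{\mathsf{SP}(\Delta)}$ an atomic substitution, and $L,L'\subseteq\Sigma^*$. Then $\zeta(L\cap L')=\zeta(L)\cap\zeta(L')$, $\zeta(L\setminus L')=\zeta(L)\setminus\zeta(L')$, and $\zeta(L)=\emptyset$ if and only if $L=\emptyset$.
   Context: Pomsets over an alphabet are isomorphism classes of finite labelled posets; $1$ is the empty pomset; $U\cdot V$ is the disjoint union with all elements of $U$ below all elements of $V$; $U\parallel V$ is the disjoint union of orders; these lift pointwise to sets of pomsets. $\mathsf{SP}(\Delta)$ is the smallest set containing $1$ and the one-element pomsets over $\Delta$, closed under $\cdot,\parallel$. Words over $\Sigma$ are identified with pomsets built from one-element pomsets using only $\cdot$; $\Sigma^*$ is the set of words. A substitution $\zeta:\Sigma\to 2^{\mathsf{SP}(\Delta)}$ is extended by $\zeta(1)=\{1\}$, $\zeta(U\cdot V)=\zeta(U)\cdot\zeta(V)$, $\zeta(U\parallel V)=\zeta(U)\parallel\zeta(V)$, and to languages by $\zeta(L)=\bigcup_{U\in L}\zeta(U)$. A pomset $U$ is a sequential prime if it is non-empty and $U=V\cdot W$ implies $V=1$ or $W=1$. $\zeta$ is atomic if (i) for each $a\in\Sigma$, $\zeta(a)$ consists only of sequential primes, and (ii) for $a,b\in\Sigma$, $\zeta(a)\cap\zeta(b)\ne\emptyset$ iff $a=b$. *)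

theory Defs
  imports Main
begin

text \<open>Concrete finite labelled posets: carrier (finite set of naturals),
  reflexive partial order on the carrier, labelling (only values on the carrier matter).\<close>

type_synonym 'a lpo = "nat set \<times> (nat \<times> nat) set \<times> (nat \<Rightarrow> 'a)"

definition is_lpo :: "'a lpo \<Rightarrow> bool" where
  "is_lpo P \<longleftrightarrow> (case P of (C, R, l) \<Rightarrow>
      finite C \<and> R \<subseteq> C \<times> C \<and> partial_order_on C R)"

definition lpo_iso :: "'a lpo \<Rightarrow> 'a lpo \<Rightarrow> bool" where
  "lpo_iso P Q \<longleftrightarrow> (case P of (C, R, l) \<Rightarrow> case Q of (C', R', l') \<Rightarrow>
      (\<exists>f. bij_betw f C C'
         \<and> (\<forall>x\<in>C. \<forall>y\<in>C. (x, y) \<in> R \<longleftrightarrow> (f x, f y) \<in> R')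
         \<and> (\<forall>x\<in>C. l' (f x) = l x)))"

definition lpo_class :: "'a lpo \<Rightarrow> 'a lpo set" where
  "lpo_class P = {Q. is_lpo Q \<and> lpo_iso P Q}"

typedef 'a pomset = "{S :: 'a lpo set. \<exists>P. is_lpo P \<and> S = lpo_class P}"
proof
  show "lpo_class ({}, {}, \<lambda>_. undefined) \<in> {S :: 'a lpo set. \<exists>P. is_lpo P \<and> S = lpo_class P}"
    by (auto simp: is_lpo_def partial_order_on_def preorder_on_def refl_on_def trans_def antisym_def)
qed

definition pom_of :: "'a lpo \<Rightarrow> 'a pomset" where
  "pom_of P = Abs_pomset (lpo_class P)"

definition pom_rep :: "'a pomset \<Rightarrow> 'a lpo" where
  "pom_rep U = (SOME P. P \<in> Rep_pomset U)"

text \<open>Disjoint unions: left part encoded by even numbers, right part by odd numbers.\<close>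

definition lpo_par :: "'a lpo \<Rightarrow> 'a lpo \<Rightarrow> 'a lpo" where
  "lpo_par P Q = (case P of (C, R, l) \<Rightarrow> case Q of (C', R', l') \<Rightarrow>
     ((\<lambda>x. 2 * x) ` C \<union> (\<lambda>x. 2 * x + 1) ` C',
      (\<lambda>(x, y). (2 * x, 2 * y)) ` R \<union> (\<lambda>(x, y). (2 * x + 1, 2 * y + 1)) ` R',
      \<lambda>n. if even n then l (n div 2) else l' (n div 2)))"

definition lpo_seq :: "'a lpo \<Rightarrow> 'a lpo \<Rightarrow> 'a lpo" where
  "lpo_seq P Q = (case P of (C, R, l) \<Rightarrow> case Q of (C', R', l') \<Rightarrow>
     ((\<lambda>x. 2 * x) ` C \<union> (\<lambda>x. 2 * x + 1) ` C',
      (\<lambda>(x, y). (2 * x, 2 * y)) ` R \<union> (\<lambda>(x, y). (2 * x + 1, 2 * y + 1)) ` R'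
        \<union> ((\<lambda>x. 2 * x) ` C \<times> (\<lambda>x. 2 * x + 1) ` C'),
      \<lambda>n. if even n then l (n div 2) else l' (n div 2)))"

definition pom_one :: "'a pomset" where
  "pom_one = pom_of ({}, {}, \<lambda>_. undefined)"

definition pom_single :: "'a \<Rightarrow> 'a pomset" where
  "pom_single a = pom_of ({0}, {(0, 0)}, \<lambda>_. a)"

definition pom_seq :: "'a pomset \<Rightarrow> 'a pomset \<Rightarrow> 'a pomset" where
  "pom_seq U V = pom_of (lpo_seq (pom_rep U) (pom_rep V))"

definition pom_par :: "'a pomset \<Rightarrow> 'a pomset \<Rightarrow> 'a pomset" where
  "pom_par U V = pom_of (lpo_par (pom_rep U) (pom_rep V))"

definition pset_seq :: "'a pomset set \<Rightarrow> 'a pomset set \<Rightarrow> 'a pomset set" where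
  "pset_seq A B = {pom_seq U V | U V. U \<in> A \<and> V \<in> B}"

definition pset_par :: "'a pomset set \<Rightarrow> 'a pomset set \<Rightarrow> 'a pomset set" where
  "pset_par A B = {pom_par U V | U V. U \<in> A \<and> V \<in> B}"

inductive_set SP :: "'a set \<Rightarrow> 'a pomset set" for \<Delta> :: "'a set" where
  SP_one: "pom_one \<in> SP \<Delta>"
| SP_single: "a \<in> \<Delta> \<Longrightarrow> pom_single a \<in> SP \<Delta>"
| SP_seq: "U \<in> SP \<Delta> \<Longrightarrow> V \<in> SP \<Delta> \<Longrightarrow> pom_seq U V \<in> SP \<Delta>"
| SP_par: "U \<in> SP \<Delta> \<Longrightarrow> V \<in> SP \<Delta> \<Longrightarrow> pom_par U V \<in> SP \<Delta>"

text \<open>Substitution extended to words (words as lists = sequential pomsets) and languages.\<close>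

fun subst_word :: "('s \<Rightarrow> 'd pomset set) \<Rightarrow> 's list \<Rightarrow> 'd pomset set" where
  "subst_word \<zeta> [] = {pom_one}"
| "subst_word \<zeta> (a # w) = pset_seq (\<zeta> a) (subst_word \<zeta> w)"

definition subst_lang :: "('s \<Rightarrow> 'd pomset set) \<Rightarrow> 's list set \<Rightarrow> 'd pomset set" where
  "subst_lang \<zeta> L = (\<Union>w\<in>L. subst_word \<zeta> w)"

definition seq_prime :: "'a pomset \<Rightarrow> bool" where
  "seq_prime U \<longleftrightarrow> U \<noteq> pom_one \<and> (\<forall>V W. U = pom_seq V W \<longrightarrow> V = pom_one \<or> W = pom_one)"

definition atomic :: "'s set \<Rightarrow> ('s \<Rightarrow> 'd pomset set) \<Rightarrow> bool" where
  "atomic \<Sigma> \<zeta> \<longleftrightarrow> (\<forall>a\<in>\<Sigma>. \<forall>U\<in>\<zeta> a. seq_prime U)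
     \<and> (\<forall>a\<in>\<Sigma>. \<forall>b\<in>\<Sigma>. \<zeta> a \<inter> \<zeta> b \<noteq> {} \<longleftrightarrow> a = b)"

end

theory Submission
  imports Defs
begin


definition iso_by :: "(nat \<Rightarrow> nat) \<Rightarrow> 'a lpo \<Rightarrow> 'a lpo \<Rightarrow> bool" where
  "iso_by f P Q \<longleftrightarrow> (case P of (C, R, l) \<Rightarrow> case Q of (C', R', l') \<Rightarrow>
      bij_betw f C C'
         \<and> (\<forall>x\<in>C. \<forall>y\<in>C. (x, y) \<in> R \<longleftrightarrow> (f x, f y) \<in> R')
         \<and> (\<forall>x\<in>C. l' (f x) = l x))"

lemma lpo_iso_by: "lpo_iso P Q \<longleftrightarrow> (\<exists>f. iso_by f P Q)"
  by (cases P; cases Q) (simp add: lpo_iso_def iso_by_def)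

lemma iso_by_refl: "iso_by id P P"
  by (cases P) (auto simp: iso_by_def)

lemma iso_by_sym:
  assumes "iso_by f P Q" shows "iso_by (inv_into (fst P) f) Q P"
proof -
  obtain C R l where P: "P = (C,R,l)" by (cases P) auto
  obtain C' R' l' where Q: "Q = (C',R',l')" by (cases Q) auto
  have b: "bij_betw f C C'" and r: "\<forall>x\<in>C. \<forall>y\<in>C. (x, y) \<in> R \<longleftrightarrow> (f x, f y) \<in> R'"
    and lb: "\<forall>x\<in>C. l' (f x) = l x" using assms by (auto simp: iso_by_def P Q)
  have b2: "bij_betw (inv_into C f) C' C" using b by (rule bij_betw_inv_into)
  have fi: "\<And>y. y \<in> C' \<Longrightarrow> f (inv_into C f y) = y" using b by (meson bij_betw_inv_into_right)
  have ii: "\<And>y. y \<in> C' \<Longrightarrow> inv_into C f y \<in> C" using b2 bij_betwE by blast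
  have "\<forall>x\<in>C'. l (inv_into C f x) = l' x" using lb fi ii by metis
  then show ?thesis unfolding P Q iso_by_def using b2 r fi ii by auto
qed

lemma iso_by_trans:
  assumes "iso_by f P Q" "iso_by g Q S" shows "iso_by (g \<circ> f) P S"
proof -
  obtain C R l where P: "P = (C,R,l)" by (cases P) auto
  obtain C' R' l' where Q: "Q = (C',R',l')" by (cases Q) auto
  obtain C'' R'' l'' where S: "S = (C'',R'',l'')" by (cases S) auto
  have b: "bij_betw f C C'" and b2: "bij_betw g C' C''" using assms by (auto simp: iso_by_def P Q S)
  have fi: "\<And>x. x \<in> C \<Longrightarrow> f x \<in> C'" using b bij_betwE by blast
  show ?thesis using assms fi bij_betw_trans[OF b b2] unfolding P Q S iso_by_def by auto
qed

lemma lpo_iso_sym: "lpo_iso P Q \<Longrightarrow> lpo_iso Q P"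
  using iso_by_sym lpo_iso_by by blast
lemma lpo_iso_trans: "lpo_iso P Q \<Longrightarrow> lpo_iso Q S \<Longrightarrow> lpo_iso P S"
  using iso_by_trans lpo_iso_by by metis
lemma lpo_iso_refl: "lpo_iso P P"
  using iso_by_refl lpo_iso_by by blast

lemma class_eq: "lpo_iso P Q \<Longrightarrow> lpo_class P = lpo_class Q"
  unfolding lpo_class_def using lpo_iso_sym lpo_iso_trans by blast

lemma pom_of_eq_iff:
  assumes "is_lpo P" "is_lpo Q" shows "pom_of P = pom_of Q \<longleftrightarrow> lpo_iso P Q"
proof
  assume "pom_of P = pom_of Q"
  then have "lpo_class P = lpo_class Q" unfolding pom_of_def
    using Abs_pomset_inject assms by blast
  moreover have "Q \<in> lpo_class Q" using assms lpo_iso_refl[of Q] by (simp add: lpo_class_def)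
  ultimately show "lpo_iso P Q" by (auto simp: lpo_class_def)
next
  assume "lpo_iso P Q" then show "pom_of P = pom_of Q" unfolding pom_of_def using class_eq by metis
qed

lemma pom_rep: "is_lpo (pom_rep U) \<and> pom_of (pom_rep U) = U"
proof -
  obtain P where P: "is_lpo P" "Rep_pomset U = lpo_class P" using Rep_pomset by blast
  have "P \<in> Rep_pomset U" using P lpo_iso_refl[of P] by (simp add: lpo_class_def)
  then have "pom_rep U \<in> lpo_class P" unfolding pom_rep_def using P(2) by (metis someI)
  then have 1: "is_lpo (pom_rep U)" "lpo_iso P (pom_rep U)" by (auto simp: lpo_class_def)
  have "pom_of (pom_rep U) = Abs_pomset (lpo_class P)" unfolding pom_of_def using class_eq 1 by metis
  also have "\<dots> = U" using P(2) Rep_pomset_inverse by metis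
  finally show ?thesis using 1 by blast
qed



lemma ev_odd_ne[simp]: "(2 * (a::nat) = 2 * b + 1) = False" "(2 * b + 1 = 2 * (a::nat)) = False"
  "(2 * (a::nat) = Suc (2 * b)) = False" "(Suc (2 * b) = 2 * (a::nat)) = False" by presburger+

lemma seq_carrier: "fst (lpo_seq (C,R,l) (D,S,m)) = (\<lambda>x. 2 * x) ` C \<union> (\<lambda>x. 2 * x + 1) ` D"
  by (simp add: lpo_seq_def)

lemma seq_mem[simp]:
  "2 * a \<in> fst (lpo_seq (C,R,l) (D,S,m)) \<longleftrightarrow> a \<in> C"
  "Suc (2 * a) \<in> fst (lpo_seq (C,R,l) (D,S,m)) \<longleftrightarrow> a \<in> D"
  by (auto simp: lpo_seq_def)

lemma seq_rel[simp]:
  "(2 * a, 2 * b) \<in> fst (snd (lpo_seq (C,R,l) (D,S,m))) \<longleftrightarrow> (a, b) \<in> R"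
  "(Suc (2 * a), Suc (2 * b)) \<in> fst (snd (lpo_seq (C,R,l) (D,S,m))) \<longleftrightarrow> (a, b) \<in> S"
  "(2 * a, Suc (2 * b)) \<in> fst (snd (lpo_seq (C,R,l) (D,S,m))) \<longleftrightarrow> a \<in> C \<and> b \<in> D"
  "(Suc (2 * a), 2 * b) \<notin> fst (snd (lpo_seq (C,R,l) (D,S,m)))"
  by (auto simp: lpo_seq_def)

lemma seq_lab[simp]:
  "snd (snd (lpo_seq (C,R,l) (D,S,m))) (2 * a) = l a"
  "snd (snd (lpo_seq (C,R,l) (D,S,m))) (Suc (2 * a)) = m a"
  by (auto simp: lpo_seq_def)

lemma nat_ev_od: obtains a where "(n::nat) = 2 * a" | a where "n = 2 * a + 1"
  by (metis dvd_mult_div_cancel odd_two_times_div_two_succ)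

lemma seq_eta: "lpo_seq P Q = (fst (lpo_seq P Q), fst (snd (lpo_seq P Q)), snd (snd (lpo_seq P Q)))"
  by simp

lemma rel_sub: "fst (snd (lpo_seq (C,R,l) (D,S,m))) \<subseteq> fst (lpo_seq (C,R,l) (D,S,m)) \<times> fst (lpo_seq (C,R,l) (D,S,m))"
  if "R \<subseteq> C \<times> C" "S \<subseteq> D \<times> D" using that by (auto simp: lpo_seq_def)

lemma is_lpo_seq:
  assumes "is_lpo P" "is_lpo Q" shows "is_lpo (lpo_seq P Q)"
proof -
  obtain C R l where P: "P = (C,R,l)" by (cases P) auto
  obtain D S m where Q: "Q = (D,S,m)" by (cases Q) auto
  have h: "finite C" "R \<subseteq> C \<times> C" "refl_on C R" "trans R" "antisym R"
          "finite D" "S \<subseteq> D \<times> D" "refl_on D S" "trans S" "antisym S"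
    using assms by (auto simp: is_lpo_def P Q partial_order_on_def preorder_on_def)
  define X where "X = fst (lpo_seq P Q)"
  define T where "T = fst (snd (lpo_seq P Q))"
  have sub: "T \<subseteq> X \<times> X" unfolding T_def X_def P Q using rel_sub h by blast
  have fin: "finite X" unfolding X_def P Q seq_carrier using h by simp
  have refl: "refl_on X T" unfolding refl_on_def X_def T_def P Q seq_carrier
    using h by (auto simp: refl_on_def)
  have trans: "trans T"
  proof (rule transI)
    fix x y z assume xy: "(x,y) \<in> T" and yz: "(y,z) \<in> T"
    have xX: "x \<in> X" "y \<in> X" "z \<in> X" using sub xy yz by auto
    show "(x,z) \<in> T"
      using xy yz xX h(2,4,7,9) unfolding T_def X_def P Q
      apply (cases x rule: nat_ev_od; cases y rule: nat_ev_od; cases z rule: nat_ev_od)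
      apply (auto dest: transD)
      done
  qed
  have anti: "antisym T"
  proof (rule antisymI)
    fix x y assume xy: "(x,y) \<in> T" and yx: "(y,x) \<in> T"
    show "x = y"
      using xy yx h(5,10) unfolding T_def P Q
      apply (cases x rule: nat_ev_od; cases y rule: nat_ev_od)
      apply (auto dest: antisymD)
      done
  qed
  obtain X' T' l' where e: "lpo_seq P Q = (X',T',l')" by (metis prod.collapse)
  show ?thesis
    unfolding is_lpo_def partial_order_on_def preorder_on_def
    using fin sub refl trans anti unfolding X_def T_def e by simp
qed



lemma seq_cong:
  assumes "iso_by f P P'" "iso_by g Q Q'"
  shows "iso_by (\<lambda>n. if even n then 2 * f (n div 2) else Suc (2 * g (n div 2))) (lpo_seq P Q) (lpo_seq P' Q')"
proof -
  obtain C R l where P: "P = (C,R,l)" by (cases P) auto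
  obtain D S m where Q: "Q = (D,S,m)" by (cases Q) auto
  obtain C' R' l' where P': "P' = (C',R',l')" by (cases P') auto
  obtain D' S' m' where Q': "Q' = (D',S',m')" by (cases Q') auto
  have bf: "bij_betw f C C'" and rf: "\<forall>x\<in>C. \<forall>y\<in>C. (x, y) \<in> R \<longleftrightarrow> (f x, f y) \<in> R'"
    and lf: "\<forall>x\<in>C. l' (f x) = l x" using assms by (auto simp: iso_by_def P P')
  have bg: "bij_betw g D D'" and rg: "\<forall>x\<in>D. \<forall>y\<in>D. (x, y) \<in> S \<longleftrightarrow> (g x, g y) \<in> S'"
    and lg: "\<forall>x\<in>D. m' (g x) = m x" using assms by (auto simp: iso_by_def Q Q')
  define h where "h = (\<lambda>n::nat. if even n then 2 * f (n div 2) else Suc (2 * g (n div 2)))"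
  have h1[simp]: "h (2 * a) = 2 * f a" for a unfolding h_def by simp
  have h2[simp]: "h (Suc (2 * a)) = Suc (2 * g a)" for a unfolding h_def by simp
  obtain X T k where e: "lpo_seq P Q = (X,T,k)" by (metis prod.collapse)
  obtain X' T' k' where e': "lpo_seq P' Q' = (X',T',k')" by (metis prod.collapse)
  have X: "X = (\<lambda>x. 2 * x) ` C \<union> (\<lambda>x. Suc (2 * x)) ` D" using e seq_carrier[of C R l D S m] P Q by simp
  have X': "X' = (\<lambda>x. 2 * x) ` C' \<union> (\<lambda>x. Suc (2 * x)) ` D'" using e' seq_carrier[of C' R' l' D' S' m'] P' Q' by simp
  have injf: "inj_on f C" and imf: "f ` C = C'" using bf by (auto simp: bij_betw_def)
  have injg: "inj_on g D" and img: "g ` D = D'" using bg by (auto simp: bij_betw_def)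
  have inj: "inj_on h X"
  proof (rule inj_onI)
    fix x y assume "x \<in> X" "y \<in> X" "h x = h y"
    then show "x = y" unfolding X using injf injg by (auto dest: inj_onD)
  qed
  have "h ` X = (\<lambda>x. 2*x)`(f`C) \<union> (\<lambda>x. Suc(2*x))`(g`D)" by (simp add: X image_Un image_image)
  then have im: "h ` X = X'" unfolding X' using imf img by simp
  have T: "T = fst (snd (lpo_seq (C,R,l) (D,S,m)))" using e P Q by simp
  have T': "T' = fst (snd (lpo_seq (C',R',l') (D',S',m')))" using e' P' Q' by simp
  have k: "k = snd (snd (lpo_seq (C,R,l) (D,S,m)))" using e P Q by simp
  have k': "k' = snd (snd (lpo_seq (C',R',l') (D',S',m')))" using e' P' Q' by simp
  have fC: "f x \<in> C'" if "x \<in> C" for x using imf that by blast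
  have gD: "g x \<in> D'" if "x \<in> D" for x using img that by blast
  have rel: "\<forall>x\<in>X. \<forall>y\<in>X. (x, y) \<in> T \<longleftrightarrow> (h x, h y) \<in> T'"
    unfolding X T T' using rf rg fC gD by auto
  have lab: "\<forall>x\<in>X. k' (h x) = k x"
    unfolding X k k' using lf lg by auto
  show ?thesis unfolding h_def[symmetric] e e' iso_by_def using inj im rel lab by (simp add: bij_betw_def)
qed

lemma pom_seq_of:
  assumes "is_lpo P" "is_lpo Q"
  shows "pom_seq (pom_of P) (pom_of Q) = pom_of (lpo_seq P Q)"
proof -
  have a: "lpo_iso (pom_rep (pom_of P)) P" using pom_rep[of "pom_of P"] assms pom_of_eq_iff by blast
  have b: "lpo_iso (pom_rep (pom_of Q)) Q" using pom_rep[of "pom_of Q"] assms pom_of_eq_iff by blast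
  have "lpo_iso (lpo_seq (pom_rep (pom_of P)) (pom_rep (pom_of Q))) (lpo_seq P Q)"
    using a b seq_cong lpo_iso_by by metis
  then show ?thesis unfolding pom_seq_def
    using pom_of_eq_iff is_lpo_seq pom_rep assms by metis
qed



lemma iso_by_alt: "iso_by f P Q \<longleftrightarrow> bij_betw f (fst P) (fst Q)
   \<and> (\<forall>x\<in>fst P. \<forall>y\<in>fst P. (x,y) \<in> fst (snd P) \<longleftrightarrow> (f x, f y) \<in> fst (snd Q))
   \<and> (\<forall>x\<in>fst P. snd (snd Q) (f x) = snd (snd P) x)"
  by (cases P; cases Q) (simp add: iso_by_def)

lemma is_lpo_restr:
  assumes "is_lpo (C,R,l)" "Z \<subseteq> C" shows "is_lpo (Z, R \<inter> Z \<times> Z, l)"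
  using assms unfolding is_lpo_def partial_order_on_def preorder_on_def refl_on_def trans_def antisym_def
  by (auto intro: finite_subset)

lemma split_iso:
  assumes lp: "is_lpo (C,R,l)" and Z: "Z \<subseteq> C" and cut: "\<forall>c\<in>Z. \<forall>d\<in>C - Z. (c,d) \<in> R"
  shows "lpo_iso (C,R,l) (lpo_seq (Z, R \<inter> Z \<times> Z, l) (C - Z, R \<inter> (C - Z) \<times> (C - Z), l))"
proof -
  have anti: "antisym R" and sub: "R \<subseteq> C \<times> C" using lp by (auto simp: is_lpo_def partial_order_on_def preorder_on_def)
  define h where "h = (\<lambda>n::nat. if n \<in> Z then 2 * n else Suc (2 * n))"
  define Q where "Q = lpo_seq (Z, R \<inter> Z \<times> Z, l) (C - Z, R \<inter> (C - Z) \<times> (C - Z), l)"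
  have fQ: "fst Q = (\<lambda>x. 2 * x) ` Z \<union> (\<lambda>x. Suc (2 * x)) ` (C - Z)"
    unfolding Q_def seq_carrier by simp
  have inj: "inj_on h C" unfolding h_def by (rule inj_onI) (auto split: if_splits)
  have im: "h ` C = fst Q" unfolding fQ h_def using Z by (auto simp: image_iff)
  have rel: "\<forall>x\<in>C. \<forall>y\<in>C. (x,y) \<in> R \<longleftrightarrow> (h x, h y) \<in> fst (snd Q)"
  proof (intro ballI)
    fix x y assume xy: "x \<in> C" "y \<in> C"
    show "(x,y) \<in> R \<longleftrightarrow> (h x, h y) \<in> fst (snd Q)"
    proof (cases "x \<in> Z"; cases "y \<in> Z")
      assume "x \<notin> Z" "y \<in> Z"
      then have "(x,y) \<notin> R" using cut xy anti by (metis DiffI antisymD)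
      then show ?thesis using \<open>x \<notin> Z\<close> \<open>y \<in> Z\<close> unfolding h_def Q_def by simp
    qed (use xy cut in \<open>auto simp: h_def Q_def\<close>)
  qed
  have lab: "\<forall>x\<in>C. snd (snd Q) (h x) = l x" unfolding h_def Q_def by simp
  have "iso_by h (C,R,l) Q" unfolding iso_by_alt using inj im rel lab by (simp add: bij_betw_def)
  then show ?thesis unfolding Q_def lpo_iso_by by blast
qed

lemma pom_split:
  assumes lp: "is_lpo (C,R,l)" and Z: "Z \<subseteq> C" and cut: "\<forall>c\<in>Z. \<forall>d\<in>C - Z. (c,d) \<in> R"
  shows "pom_of (C,R,l) = pom_seq (pom_of (Z, R \<inter> Z \<times> Z, l)) (pom_of (C - Z, R \<inter> (C - Z) \<times> (C - Z), l))"
proof -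
  have l1: "is_lpo (Z, R \<inter> Z \<times> Z, l)" using is_lpo_restr lp Z by blast
  have l2: "is_lpo (C - Z, R \<inter> (C - Z) \<times> (C - Z), l)" using is_lpo_restr lp by blast
  show ?thesis using pom_seq_of[OF l1 l2] split_iso[OF assms] pom_of_eq_iff is_lpo_seq[OF l1 l2] lp by metis
qed

lemma is_lpo_empty: "is_lpo ({}, {}, l)"
  by (auto simp: is_lpo_def partial_order_on_def preorder_on_def refl_on_def trans_def antisym_def)

lemma pom_one_iff:
  assumes "is_lpo P" shows "pom_of P = pom_one \<longleftrightarrow> fst P = {}"
proof -
  obtain C R l where P: "P = (C,R,l)" by (cases P) auto
  have sub: "R \<subseteq> C \<times> C" using assms P by (auto simp: is_lpo_def)
  have "pom_of P = pom_one \<longleftrightarrow> lpo_iso (C,R,l) ({}, {}, \<lambda>_. undefined)"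
    unfolding pom_one_def P using pom_of_eq_iff is_lpo_empty assms P by blast
  also have "\<dots> \<longleftrightarrow> C = {}" using sub unfolding lpo_iso_def by (auto simp: bij_betw_def)
  finally show ?thesis using P by simp
qed



lemma seq_fst: "fst (lpo_seq (C,R,l) (D,S,m)) = (\<lambda>x. 2 * x) ` C \<union> (\<lambda>x. Suc (2 * x)) ` D"
  using seq_carrier by simp

lemma dichot:
  assumes iso: "iso_by f (lpo_seq (C1,R1,l1) (D1,S1,m1)) (lpo_seq (C2,R2,l2) (D2,S2,m2))"
  shows "f ` ((\<lambda>x. 2 * x) ` C1) \<subseteq> (\<lambda>x. 2 * x) ` C2 \<or> (\<lambda>x. 2 * x) ` C2 \<subseteq> f ` ((\<lambda>x. 2 * x) ` C1)"
proof (rule ccontr)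
  let ?X1 = "fst (lpo_seq (C1,R1,l1) (D1,S1,m1))"
  let ?X2 = "fst (lpo_seq (C2,R2,l2) (D2,S2,m2))"
  have b: "bij_betw f ?X1 ?X2" and r: "\<forall>x\<in>?X1. \<forall>y\<in>?X1. (x,y) \<in> fst (snd (lpo_seq (C1,R1,l1) (D1,S1,m1)))
      \<longleftrightarrow> (f x, f y) \<in> fst (snd (lpo_seq (C2,R2,l2) (D2,S2,m2)))"
    using iso unfolding iso_by_alt by auto
  have im: "f ` ?X1 = ?X2" using b by (simp add: bij_betw_def)
  assume "\<not> ?thesis"
  then obtain c where c: "c \<in> C1" "f (2 * c) \<notin> (\<lambda>x. 2 * x) ` C2" by auto
  from \<open>\<not> ?thesis\<close> obtain d where d: "d \<in> C2" "2 * d \<notin> f ` ((\<lambda>x. 2 * x) ` C1)" by auto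
  have "f (2 * c) \<in> ?X2" using im c by (metis imageI seq_mem(1))
  then obtain e where e: "f (2 * c) = Suc (2 * e)" "e \<in> D2" using c(2) unfolding seq_fst by auto
  have "2 * d \<in> f ` ?X1" using im d by simp
  then obtain z where z: "z \<in> ?X1" "2 * d = f z" by auto
  then obtain a where a: "z = Suc (2 * a)" "a \<in> D1" using d(2) unfolding seq_fst by auto
  have "(2 * c, z) \<in> fst (snd (lpo_seq (C1,R1,l1) (D1,S1,m1)))" using a c by simp
  then have "(f (2 * c), f z) \<in> fst (snd (lpo_seq (C2,R2,l2) (D2,S2,m2)))"
    using r z c by (metis seq_mem(1))
  then show False using e z by (metis seq_rel(4))
qed

lemma cutlemma:
  assumes iso: "iso_by f (lpo_seq (C1,R1,l1) (D1,S1,m1)) (lpo_seq (C2,R2,l2) (D2,S2,m2))"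
    and lp2: "is_lpo (C2,R2,l2)" and pr: "seq_prime (pom_of (C2,R2,l2))" and ne: "C1 \<noteq> {}"
    and sub: "f ` ((\<lambda>x. 2 * x) ` C1) \<subseteq> (\<lambda>x. 2 * x) ` C2"
  shows "f ` ((\<lambda>x. 2 * x) ` C1) = (\<lambda>x. 2 * x) ` C2"
proof -
  let ?X1 = "fst (lpo_seq (C1,R1,l1) (D1,S1,m1))"
  let ?X2 = "fst (lpo_seq (C2,R2,l2) (D2,S2,m2))"
  let ?A = "f ` ((\<lambda>x. 2 * x) ` C1)"
  have b: "bij_betw f ?X1 ?X2" and r: "\<forall>x\<in>?X1. \<forall>y\<in>?X1. (x,y) \<in> fst (snd (lpo_seq (C1,R1,l1) (D1,S1,m1)))
      \<longleftrightarrow> (f x, f y) \<in> fst (snd (lpo_seq (C2,R2,l2) (D2,S2,m2)))"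
    using iso unfolding iso_by_alt by auto
  have im: "f ` ?X1 = ?X2" using b by (simp add: bij_betw_def)
  define Z where "Z = {c \<in> C2. 2 * c \<in> ?A}"
  have ZC: "Z \<subseteq> C2" unfolding Z_def by auto
  have cut: "\<forall>c\<in>Z. \<forall>d\<in>C2 - Z. (c,d) \<in> R2"
  proof (intro ballI)
    fix c d assume c: "c \<in> Z" and d: "d \<in> C2 - Z"
    obtain c1 where c1: "c1 \<in> C1" "2 * c = f (2 * c1)" using c unfolding Z_def by auto
    have "2 * d \<in> f ` ?X1" using im d by simp
    then obtain z where z: "z \<in> ?X1" "2 * d = f z" by auto
    have "z \<notin> (\<lambda>x. 2 * x) ` C1" using z d unfolding Z_def by auto
    then obtain a where a: "z = Suc (2 * a)" "a \<in> D1" using z unfolding seq_fst by auto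
    have "(2 * c1, z) \<in> fst (snd (lpo_seq (C1,R1,l1) (D1,S1,m1)))" using a c1 by simp
    then have "(f (2 * c1), f z) \<in> fst (snd (lpo_seq (C2,R2,l2) (D2,S2,m2)))"
      using r z c1 by (metis seq_mem(1))
    then show "(c,d) \<in> R2" using c1 z by (metis seq_rel(1))
  qed
  have lZ: "is_lpo (Z, R2 \<inter> Z \<times> Z, l2)" using is_lpo_restr lp2 ZC by blast
  have lZ': "is_lpo (C2 - Z, R2 \<inter> (C2 - Z) \<times> (C2 - Z), l2)" using is_lpo_restr lp2 by blast
  have "pom_of (Z, R2 \<inter> Z \<times> Z, l2) = pom_one \<or> pom_of (C2 - Z, R2 \<inter> (C2 - Z) \<times> (C2 - Z), l2) = pom_one"
    using pr pom_split[OF lp2 ZC cut] unfolding seq_prime_def by blast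
  then have "Z = {} \<or> C2 - Z = {}" using pom_one_iff lZ lZ' by (metis fst_conv)
  moreover have "Z \<noteq> {}"
  proof -
    obtain c1 where "c1 \<in> C1" using ne by auto
    then obtain c where "f (2 * c1) = 2 * c" "c \<in> C2" using sub by blast
    then have "c \<in> Z" unfolding Z_def using \<open>c1 \<in> C1\<close> by force
    then show ?thesis by auto
  qed
  ultimately have "C2 \<subseteq> Z" by auto
  then have "(\<lambda>x. 2 * x) ` C2 \<subseteq> ?A" unfolding Z_def by auto
  then show ?thesis using sub by blast
qed



lemma matchlemma:
  assumes iso: "iso_by f (lpo_seq (C1,R1,l1) (D1,S1,m1)) (lpo_seq (C2,R2,l2) (D2,S2,m2))"
    and eq: "f ` ((\<lambda>x. 2 * x) ` C1) = (\<lambda>x. 2 * x) ` C2"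
  shows "lpo_iso (C1,R1,l1) (C2,R2,l2) \<and> lpo_iso (D1,S1,m1) (D2,S2,m2)"
proof -
  let ?X1 = "fst (lpo_seq (C1,R1,l1) (D1,S1,m1))"
  let ?X2 = "fst (lpo_seq (C2,R2,l2) (D2,S2,m2))"
  let ?T1 = "fst (snd (lpo_seq (C1,R1,l1) (D1,S1,m1)))"
  let ?T2 = "fst (snd (lpo_seq (C2,R2,l2) (D2,S2,m2)))"
  let ?k1 = "snd (snd (lpo_seq (C1,R1,l1) (D1,S1,m1)))"
  let ?k2 = "snd (snd (lpo_seq (C2,R2,l2) (D2,S2,m2)))"
  have b: "bij_betw f ?X1 ?X2" using iso[unfolded iso_by_alt] by blast
  have r: "\<forall>x\<in>?X1. \<forall>y\<in>?X1. (x,y) \<in> ?T1 \<longleftrightarrow> (f x, f y) \<in> ?T2" using iso[unfolded iso_by_alt] by blast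
  have lb: "\<forall>x\<in>?X1. ?k2 (f x) = ?k1 x" using iso[unfolded iso_by_alt] by blast
  have im: "f ` ?X1 = ?X2" and inj: "inj_on f ?X1" using b by (auto simp: bij_betw_def)
  define h1 where "h1 = (\<lambda>c. f (2 * c) div 2)"
  define h2 where "h2 = (\<lambda>c. f (Suc (2 * c)) div 2)"
  have h1: "f (2 * c) = 2 * h1 c \<and> h1 c \<in> C2" if "c \<in> C1" for c
  proof -
    have "f (2 * c) \<in> f ` ((\<lambda>x. 2 * x) ` C1)" using that by blast
    then have "f (2 * c) \<in> (\<lambda>x. 2 * x) ` C2" by (simp only: eq)
    then obtain c' where "f (2 * c) = 2 * c'" "c' \<in> C2" by blast
    then show ?thesis unfolding h1_def by simp
  qed
  have h2: "f (Suc (2 * c)) = Suc (2 * h2 c) \<and> h2 c \<in> D2" if "c \<in> D1" for c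
  proof -
    have "Suc (2 * c) \<in> ?X1" using that by simp
    then have "f (Suc (2 * c)) \<in> ?X2" using im by blast
    moreover have "f (Suc (2 * c)) \<notin> (\<lambda>x. 2 * x) ` C2"
    proof
      assume "f (Suc (2 * c)) \<in> (\<lambda>x. 2 * x) ` C2"
      then have "f (Suc (2 * c)) \<in> f ` ((\<lambda>x. 2 * x) ` C1)" by (simp only: eq)
      then obtain c1 where "c1 \<in> C1" "f (Suc (2 * c)) = f (2 * c1)" by blast
      moreover have "Suc (2 * c) \<in> ?X1" "2 * c1 \<in> ?X1" using \<open>c1 \<in> C1\<close> that by simp_all
      ultimately have "Suc (2 * c) = 2 * c1" using inj_onD[OF inj] by blast
      then show False by simp
    qed
    ultimately obtain e where "f (Suc (2 * c)) = Suc (2 * e)" "e \<in> D2" unfolding seq_fst by auto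
    then show ?thesis unfolding h2_def by simp
  qed
  have i1: "iso_by h1 (C1,R1,l1) (C2,R2,l2)"
    unfolding iso_by_def
  proof (simp, intro conjI ballI)
    show "bij_betw h1 C1 C2" unfolding bij_betw_def
    proof
      show "inj_on h1 C1"
      proof (rule inj_onI)
        fix x y assume "x \<in> C1" "y \<in> C1" "h1 x = h1 y"
        then have "f (2 * x) = f (2 * y)" using h1 by metis
        moreover have "2 * x \<in> ?X1" "2 * y \<in> ?X1" using \<open>x \<in> C1\<close> \<open>y \<in> C1\<close> by simp_all
        ultimately have "2 * x = 2 * y" using inj_onD[OF inj] by blast
        then show "x = y" by simp
      qed
      show "h1 ` C1 = C2"
      proof
        show "h1 ` C1 \<subseteq> C2" using h1 by auto
        show "C2 \<subseteq> h1 ` C1"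
        proof
          fix c assume "c \<in> C2"
          then have "2 * c \<in> (\<lambda>x. 2 * x) ` C2" by blast
          then have "2 * c \<in> f ` ((\<lambda>x. 2 * x) ` C1)" by (simp only: eq)
          then obtain c1 where "c1 \<in> C1" "2 * c = f (2 * c1)" by auto
          then show "c \<in> h1 ` C1" using h1 by force
        qed
      qed
    qed
    fix x y assume "x \<in> C1" "y \<in> C1"
    then have "2 * x \<in> ?X1" "2 * y \<in> ?X1" by simp_all
    then have "(2 * x, 2 * y) \<in> ?T1 \<longleftrightarrow> (f (2 * x), f (2 * y)) \<in> ?T2" using r by blast
    then show "((x, y) \<in> R1) = ((h1 x, h1 y) \<in> R2)" using h1 \<open>x \<in> C1\<close> \<open>y \<in> C1\<close> by simp
  next
    fix x assume "x \<in> C1"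
    then have "2 * x \<in> ?X1" by simp
    then have "?k2 (f (2 * x)) = ?k1 (2 * x)" using lb by blast
    then show "l2 (h1 x) = l1 x" using h1 \<open>x \<in> C1\<close> by simp
  qed
  have i2: "iso_by h2 (D1,S1,m1) (D2,S2,m2)"
    unfolding iso_by_def
  proof (simp, intro conjI ballI)
    show "bij_betw h2 D1 D2" unfolding bij_betw_def
    proof
      show "inj_on h2 D1"
      proof (rule inj_onI)
        fix x y assume "x \<in> D1" "y \<in> D1" "h2 x = h2 y"
        then have "f (Suc (2 * x)) = f (Suc (2 * y))" using h2 by metis
        moreover have "Suc (2 * x) \<in> ?X1" "Suc (2 * y) \<in> ?X1" using \<open>x \<in> D1\<close> \<open>y \<in> D1\<close> by simp_all
        ultimately have "Suc (2 * x) = Suc (2 * y)" using inj_onD[OF inj] by blast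
        then show "x = y" by simp
      qed
      show "h2 ` D1 = D2"
      proof
        show "h2 ` D1 \<subseteq> D2" using h2 by auto
        show "D2 \<subseteq> h2 ` D1"
        proof
          fix c assume "c \<in> D2"
          then have "Suc (2 * c) \<in> f ` ?X1" using im by simp
          then obtain z where z: "z \<in> ?X1" "Suc (2 * c) = f z" by auto
          have "z \<notin> (\<lambda>x. 2 * x) ` C1"
          proof
            assume "z \<in> (\<lambda>x. 2 * x) ` C1"
            then have "f z \<in> f ` ((\<lambda>x. 2 * x) ` C1)" by blast
            then have "f z \<in> (\<lambda>x. 2 * x) ` C2" by (simp only: eq)
            then show False using z by auto
          qed
          then obtain d where "z = Suc (2 * d)" "d \<in> D1" using z unfolding seq_fst by auto
          then show "c \<in> h2 ` D1" using h2 z by force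
        qed
      qed
    qed
    fix x y assume "x \<in> D1" "y \<in> D1"
    then have "Suc (2 * x) \<in> ?X1" "Suc (2 * y) \<in> ?X1" by simp_all
    then have "(Suc (2 * x), Suc (2 * y)) \<in> ?T1 \<longleftrightarrow> (f (Suc (2 * x)), f (Suc (2 * y))) \<in> ?T2" using r by blast
    then show "((x, y) \<in> S1) = ((h2 x, h2 y) \<in> S2)" using h2 \<open>x \<in> D1\<close> \<open>y \<in> D1\<close> by simp
  next
    fix x assume "x \<in> D1"
    then have "Suc (2 * x) \<in> ?X1" by simp
    then have "?k2 (f (Suc (2 * x))) = ?k1 (Suc (2 * x))" using lb by blast
    then show "m2 (h2 x) = m1 x" using h2 \<open>x \<in> D1\<close> by simp
  qed
  show ?thesis using i1 i2 lpo_iso_by by blast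
qed



lemma rep_tuple: obtains C R l where "pom_rep U = (C,R,l)" "is_lpo (C,R,l)" "pom_of (C,R,l) = U"
  using pom_rep[of U] by (metis prod_cases3)

lemma cancel:
  assumes p1: "seq_prime U1" and p2: "seq_prime U2" and e: "pom_seq U1 V1 = pom_seq U2 V2"
  shows "U1 = U2 \<and> V1 = V2"
proof -
  obtain C1 R1 l1 where P1: "pom_rep U1 = (C1,R1,l1)" "is_lpo (C1,R1,l1)" "pom_of (C1,R1,l1) = U1" by (rule rep_tuple)
  obtain D1 S1 m1 where Q1: "pom_rep V1 = (D1,S1,m1)" "is_lpo (D1,S1,m1)" "pom_of (D1,S1,m1) = V1" by (rule rep_tuple)
  obtain C2 R2 l2 where P2: "pom_rep U2 = (C2,R2,l2)" "is_lpo (C2,R2,l2)" "pom_of (C2,R2,l2) = U2" by (rule rep_tuple)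
  obtain D2 S2 m2 where Q2: "pom_rep V2 = (D2,S2,m2)" "is_lpo (D2,S2,m2)" "pom_of (D2,S2,m2) = V2" by (rule rep_tuple)
  let ?S1 = "lpo_seq (C1,R1,l1) (D1,S1,m1)"
  let ?S2 = "lpo_seq (C2,R2,l2) (D2,S2,m2)"
  have "pom_of ?S1 = pom_of ?S2" using e unfolding pom_seq_def P1 Q1 P2 Q2 .
  moreover have l1: "is_lpo ?S1" using is_lpo_seq P1(2) Q1(2) by blast
  moreover have l2: "is_lpo ?S2" using is_lpo_seq P2(2) Q2(2) by blast
  ultimately have "lpo_iso ?S1 ?S2" using pom_of_eq_iff by blast
  then obtain f where iso: "iso_by f ?S1 ?S2" using lpo_iso_by by blast
  have "pom_of (C1,R1,l1) \<noteq> pom_one" using p1 P1(3) unfolding seq_prime_def by simp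
  then have ne1: "C1 \<noteq> {}" using pom_one_iff[OF P1(2)] by simp
  have "pom_of (C2,R2,l2) \<noteq> pom_one" using p2 P2(3) unfolding seq_prime_def by simp
  then have ne2: "C2 \<noteq> {}" using pom_one_iff[OF P2(2)] by simp
  have b: "bij_betw f (fst ?S1) (fst ?S2)" using iso[unfolded iso_by_alt] by blast
  have inj: "inj_on f (fst ?S1)" and im: "f ` fst ?S1 = fst ?S2" using b by (auto simp: bij_betw_def)
  have s1: "(\<lambda>x. 2 * x) ` C1 \<subseteq> fst ?S1" unfolding seq_fst by blast
  have s2: "(\<lambda>x. 2 * x) ` C2 \<subseteq> fst ?S2" unfolding seq_fst by blast
  have eq: "f ` ((\<lambda>x. 2 * x) ` C1) = (\<lambda>x. 2 * x) ` C2"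
  proof (cases "f ` ((\<lambda>x. 2 * x) ` C1) \<subseteq> (\<lambda>x. 2 * x) ` C2")
    case True
    then show ?thesis using cutlemma[OF iso P2(2)] P2(3) p2 ne1 by blast
  next
    case False
    then have sub: "(\<lambda>x. 2 * x) ` C2 \<subseteq> f ` ((\<lambda>x. 2 * x) ` C1)" using dichot[OF iso] by blast
    define g where "g = inv_into (fst ?S1) f"
    have isog: "iso_by g ?S2 ?S1" unfolding g_def using iso_by_sym[OF iso] .
    have "g ` ((\<lambda>x. 2 * x) ` C2) \<subseteq> g ` (f ` ((\<lambda>x. 2 * x) ` C1))" using sub by blast
    also have "\<dots> = (\<lambda>x. 2 * x) ` C1" unfolding g_def using inv_into_image_cancel[OF inj s1] .
    finally have "g ` ((\<lambda>x. 2 * x) ` C2) = (\<lambda>x. 2 * x) ` C1"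
      using cutlemma[OF isog P1(2)] P1(3) p1 ne2 by blast
    then have "f ` (g ` ((\<lambda>x. 2 * x) ` C2)) = f ` ((\<lambda>x. 2 * x) ` C1)" by simp
    moreover have "f ` (g ` ((\<lambda>x. 2 * x) ` C2)) = (\<lambda>x. 2 * x) ` C2"
      unfolding g_def using image_inv_into_cancel[OF im s2] .
    ultimately show ?thesis by simp
  qed
  have "lpo_iso (C1,R1,l1) (C2,R2,l2) \<and> lpo_iso (D1,S1,m1) (D2,S2,m2)" using matchlemma[OF iso eq] .
  then have "pom_of (C1,R1,l1) = pom_of (C2,R2,l2)" "pom_of (D1,S1,m1) = pom_of (D2,S2,m2)"
    using pom_of_eq_iff[OF P1(2) P2(2)] pom_of_eq_iff[OF Q1(2) Q2(2)] by blast+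
  then show ?thesis using P1(3) Q1(3) P2(3) Q2(3) by simp
qed

lemma seq_ne_one:
  assumes "seq_prime U" shows "pom_seq U V \<noteq> pom_one"
proof
  assume a: "pom_seq U V = pom_one"
  obtain C R l where P: "pom_rep U = (C,R,l)" "is_lpo (C,R,l)" "pom_of (C,R,l) = U" by (rule rep_tuple)
  obtain D S m where Q: "pom_rep V = (D,S,m)" "is_lpo (D,S,m)" "pom_of (D,S,m) = V" by (rule rep_tuple)
  have "pom_of (lpo_seq (C,R,l) (D,S,m)) = pom_one" using a unfolding pom_seq_def P Q .
  moreover have "is_lpo (lpo_seq (C,R,l) (D,S,m))" using is_lpo_seq P(2) Q(2) by blast
  ultimately have "fst (lpo_seq (C,R,l) (D,S,m)) = {}" using pom_one_iff by blast
  then have "C = {}" unfolding seq_fst by blast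
  then have "U = pom_one" using pom_one_iff[OF P(2)] P(3) by simp
  then show False using assms unfolding seq_prime_def by blast
qed

lemma word_inj:
  assumes atom: "atomic \<Sigma> \<zeta>"
  shows "w \<in> lists \<Sigma> \<Longrightarrow> w' \<in> lists \<Sigma> \<Longrightarrow> X \<in> subst_word \<zeta> w \<Longrightarrow> X \<in> subst_word \<zeta> w' \<Longrightarrow> w = w'"
proof (induction w arbitrary: w' X)
  case Nil
  show ?case
  proof (cases w')
    case (Cons b v)
    then obtain U V where "U \<in> \<zeta> b" "X = pom_seq U V" using Nil by (auto simp: pset_seq_def)
    moreover have "seq_prime U" using atom Cons Nil.prems(2) \<open>U \<in> \<zeta> b\<close> unfolding atomic_def by auto
    ultimately show ?thesis using Nil.prems seq_ne_one by auto
  qed simp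
next
  case (Cons a w)
  show ?case
  proof (cases w')
    case Nil
    obtain U V where "U \<in> \<zeta> a" "X = pom_seq U V" using Cons.prems by (auto simp: pset_seq_def)
    moreover have "seq_prime U" using atom Cons.prems(1) \<open>U \<in> \<zeta> a\<close> unfolding atomic_def by auto
    ultimately show ?thesis using Cons.prems Nil seq_ne_one by auto
  next
    case (Cons b v)
    obtain U V where U: "U \<in> \<zeta> a" "V \<in> subst_word \<zeta> w" "X = pom_seq U V"
      using Cons.prems by (auto simp: pset_seq_def)
    obtain U' V' where U': "U' \<in> \<zeta> b" "V' \<in> subst_word \<zeta> v" "X = pom_seq U' V'"
      using Cons.prems Cons by (auto simp: pset_seq_def)
    have a: "a \<in> \<Sigma>" "w \<in> lists \<Sigma>" using Cons.prems by auto
    have b: "b \<in> \<Sigma>" "v \<in> lists \<Sigma>" using Cons.prems Cons by auto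
    have "seq_prime U" "seq_prime U'" using atom a b U U' unfolding atomic_def by auto
    then have "U = U' \<and> V = V'" using cancel[of U U' V V'] U(3) U'(3) by blast
    then have "\<zeta> a \<inter> \<zeta> b \<noteq> {}" using U U' by blast
    then have "a = b" using atom a b unfolding atomic_def by blast
    moreover have "w = v" using Cons.IH[OF a(2) b(2)] U U' \<open>U = U' \<and> V = V'\<close> by blast
    ultimately show ?thesis using Cons by simp
  qed
qed

lemma word_ne:
  assumes atom: "atomic \<Sigma> \<zeta>"
  shows "w \<in> lists \<Sigma> \<Longrightarrow> subst_word \<zeta> w \<noteq> {}"
proof (induction w)
  case (Cons a w)
  have "a \<in> \<Sigma>" using Cons.prems by simp
  then have "\<zeta> a \<inter> \<zeta> a \<noteq> {}" using atom unfolding atomic_def by blast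
  then have "\<zeta> a \<noteq> {}" by simp
  then show ?case using Cons by (auto simp: pset_seq_def)
qed simp

theorem lemma3p12:
  fixes \<Sigma> :: "'s set" and \<Delta> :: "'d set" and \<zeta> :: "'s \<Rightarrow> 'd pomset set"
    and L L' :: "'s list set"
  assumes subst: "\<forall>a\<in>\<Sigma>. \<zeta> a \<subseteq> SP \<Delta>"
    and atom: "atomic \<Sigma> \<zeta>"
    and L: "L \<subseteq> lists \<Sigma>" and L': "L' \<subseteq> lists \<Sigma>"
  shows "subst_lang \<zeta> (L \<inter> L') = subst_lang \<zeta> L \<inter> subst_lang \<zeta> L'
       \<and> subst_lang \<zeta> (L - L') = subst_lang \<zeta> L - subst_lang \<zeta> L'
       \<and> (subst_lang \<zeta> L = {} \<longleftrightarrow> L = {})"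
proof (intro conjI)
  have inj: "w = w'" if "w \<in> L" "w' \<in> L'" "X \<in> subst_word \<zeta> w" "X \<in> subst_word \<zeta> w'" for w w' X
    using word_inj[OF atom] that L L' by blast
  show "subst_lang \<zeta> (L \<inter> L') = subst_lang \<zeta> L \<inter> subst_lang \<zeta> L'"
  proof
    show "subst_lang \<zeta> (L \<inter> L') \<subseteq> subst_lang \<zeta> L \<inter> subst_lang \<zeta> L'"
      unfolding subst_lang_def by blast
    show "subst_lang \<zeta> L \<inter> subst_lang \<zeta> L' \<subseteq> subst_lang \<zeta> (L \<inter> L')"
    proof
      fix X assume "X \<in> subst_lang \<zeta> L \<inter> subst_lang \<zeta> L'"
      then obtain w w' where w: "w \<in> L" "X \<in> subst_word \<zeta> w" "w' \<in> L'" "X \<in> subst_word \<zeta> w'"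
        unfolding subst_lang_def by blast
      then have "w = w'" using inj by blast
      then show "X \<in> subst_lang \<zeta> (L \<inter> L')" using w unfolding subst_lang_def by blast
    qed
  qed
  show "subst_lang \<zeta> (L - L') = subst_lang \<zeta> L - subst_lang \<zeta> L'"
  proof
    show "subst_lang \<zeta> L - subst_lang \<zeta> L' \<subseteq> subst_lang \<zeta> (L - L')"
      unfolding subst_lang_def by blast
    show "subst_lang \<zeta> (L - L') \<subseteq> subst_lang \<zeta> L - subst_lang \<zeta> L'"
    proof
      fix X assume "X \<in> subst_lang \<zeta> (L - L')"
      then obtain w where w: "w \<in> L" "w \<notin> L'" "X \<in> subst_word \<zeta> w"
        unfolding subst_lang_def by blast
      have "X \<notin> subst_lang \<zeta> L'"
      proof
        assume "X \<in> subst_lang \<zeta> L'"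
        then obtain w' where "w' \<in> L'" "X \<in> subst_word \<zeta> w'" unfolding subst_lang_def by blast
        then have "w = w'" using inj w by blast
        then show False using w \<open>w' \<in> L'\<close> by simp
      qed
      then show "X \<in> subst_lang \<zeta> L - subst_lang \<zeta> L'" using w unfolding subst_lang_def by blast
    qed
  qed
  show "subst_lang \<zeta> L = {} \<longleftrightarrow> L = {}"
  proof
    assume e: "subst_lang \<zeta> L = {}"
    show "L = {}"
    proof (rule ccontr)
      assume "L \<noteq> {}"
      then obtain w where "w \<in> L" by blast
      then have "subst_word \<zeta> w \<noteq> {}" using word_ne[OF atom] L by blast
      then show False using e \<open>w \<in> L\<close> unfolding subst_lang_def by blast
    qed
  qed (simp add: subst_lang_def)
qed

end
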